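(* Let $X$ be a locally Menger Hausdorff $P$-space, let $Y$ be a $P$-space, and let $q:Y\to Z$ be a quotient mapping. Then the mapping $f:X\times Y\to X\times Z$ given by $f(x,y)=(x,q(y))$ is a quotient mapping.
   Context: A $P$-space is a space in which every countable intersection of open sets is open. A space $X$ is Menger if for each sequence $(\mathcal{U}_n)$ of open covers of $X$ there is a sequence $(\mathcal{V}_n)$ with each $\mathcal{V}_n$ a finite subset of $\mathcal{U}_n$ and $\bigcup_{n}\bigcup\mathcal{V}_n=X$. A space $X$ is locally Menger if for each $x\in X$ there exist an open set $U$ and a Menger subspace $Y$ of $X$ with $x\in U\subseteq Y$. *)

theory Defs
  imports "HOL-Analysis.Analysis"
begin

text \<open>P-space: every countable intersection of open sets is open
  (intersection taken inside the underlying space, so the empty family is harmless).\<close>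
definition p_space :: "'a topology \<Rightarrow> bool" where
  "p_space X \<longleftrightarrow>
     (\<forall>\<F>. countable \<F> \<and> (\<forall>U\<in>\<F>. openin X U) \<longrightarrow> openin X (topspace X \<inter> \<Inter>\<F>))"

definition menger_space :: "'a topology \<Rightarrow> bool" where
  "menger_space X \<longleftrightarrow>
     (\<forall>\<U> :: nat \<Rightarrow> 'a set set.
        (\<forall>n. (\<forall>U\<in>\<U> n. openin X U) \<and> topspace X \<subseteq> \<Union>(\<U> n)) \<longrightarrow>
        (\<exists>\<V> :: nat \<Rightarrow> 'a set set.
           (\<forall>n. finite (\<V> n) \<and> \<V> n \<subseteq> \<U> n) \<and> topspace X \<subseteq> (\<Union>n. \<Union>(\<V> n))))"

definition locally_menger :: "'a topology \<Rightarrow> bool" where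
  "locally_menger X \<longleftrightarrow>
     (\<forall>x\<in>topspace X. \<exists>U Y. openin X U \<and> Y \<subseteq> topspace X \<and>
        menger_space (subtopology X Y) \<and> x \<in> U \<and> U \<subseteq> Y)"

end

theory Submission
  imports Defs
begin

definition lind_set :: "'a topology \<Rightarrow> 'a set \<Rightarrow> bool" where
  "lind_set X K \<longleftrightarrow> K \<subseteq> topspace X \<and>
     (\<forall>\<U>. (\<forall>U\<in>\<U>. openin X U) \<and> K \<subseteq> \<Union>\<U> \<longrightarrow>
        (\<exists>\<V>. \<V> \<subseteq> \<U> \<and> countable \<V> \<and> K \<subseteq> \<Union>\<V>))"

lemma lind_idx:
  assumes "lind_set X K" "\<And>x. x \<in> K \<Longrightarrow> openin X (A x)" "\<And>x. x \<in> K \<Longrightarrow> x \<in> A x"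
  obtains C where "C \<subseteq> K" "countable C" "K \<subseteq> \<Union>(A ` C)"
proof -
  have "\<forall>U\<in>A ` K. openin X U" "K \<subseteq> \<Union>(A ` K)" using assms by auto
  then obtain \<V> where V: "\<V> \<subseteq> A ` K" "countable \<V>" "K \<subseteq> \<Union>\<V>"
    using assms(1) unfolding lind_set_def by meson
  then obtain C where "countable C" "C \<subseteq> K" "\<V> = A ` C"
    using countable_subset_image[of \<V> A K] by blast
  then show ?thesis using that V by blast
qed

lemma menger_lind:
  assumes "menger_space (subtopology X M)" "M \<subseteq> topspace X"
  shows "lind_set X M"
  unfolding lind_set_def
proof (intro conjI allI impI)
  show "M \<subseteq> topspace X" by fact
  fix \<U> assume H: "(\<forall>U\<in>\<U>. openin X U) \<and> M \<subseteq> \<Union>\<U>"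
  define f where "f = (\<lambda>U. M \<inter> U)"
  have ts: "topspace (subtopology X M) = M" using assms(2) by auto
  have c1: "\<forall>n::nat. (\<forall>U\<in>(\<lambda>n. f ` \<U>) n. openin (subtopology X M) U) \<and> topspace (subtopology X M) \<subseteq> \<Union>((\<lambda>n. f ` \<U>) n)"
  proof
    fix n :: nat
    have "\<forall>U\<in>f ` \<U>. openin (subtopology X M) U"
      using H unfolding f_def by (blast intro: openin_subtopology_Int2)
    moreover have "topspace (subtopology X M) \<subseteq> \<Union>(f ` \<U>)"
      unfolding ts f_def using H by blast
    ultimately show "(\<forall>U\<in>(\<lambda>n. f ` \<U>) n. openin (subtopology X M) U) \<and> topspace (subtopology X M) \<subseteq> \<Union>((\<lambda>n. f ` \<U>) n)"
      by simp
  qed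
  have "\<exists>\<V> :: nat \<Rightarrow> 'a set set. (\<forall>n. finite (\<V> n) \<and> \<V> n \<subseteq> (\<lambda>n. f ` \<U>) n) \<and> topspace (subtopology X M) \<subseteq> (\<Union>n. \<Union>(\<V> n))"
    using mp[OF spec[OF assms(1)[unfolded menger_space_def], of "\<lambda>n. f ` \<U>"] c1] by simp
  then obtain \<V> :: "nat \<Rightarrow> 'a set set" where V: "\<forall>n. finite (\<V> n) \<and> \<V> n \<subseteq> f ` \<U>"
     "topspace (subtopology X M) \<subseteq> (\<Union>n. \<Union>(\<V> n))"
    by auto
  have "countable (\<Union>n. \<V> n)" using V(1) by (intro countable_UN) (auto intro: countable_finite)
  moreover have "(\<Union>n. \<V> n) \<subseteq> f ` \<U>" using V(1) by blast
  ultimately have "countable (\<Union>n. \<V> n) \<and> (\<Union>n. \<V> n) \<subseteq> f ` \<U>" by blast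
  from this[unfolded countable_subset_image] obtain A' where A': "countable A'" "A' \<subseteq> \<U>" "(\<Union>n. \<V> n) = f ` A'"
    by blast
  have "M \<subseteq> \<Union>A'"
  proof
    fix x assume "x \<in> M"
    then obtain n W where "W \<in> \<V> n" "x \<in> W" using V(2) ts by auto
    then have "W \<in> f ` A'" using A'(3) by blast
    then show "x \<in> \<Union>A'" using \<open>x \<in> W\<close> unfolding f_def by auto
  qed
  then show "\<exists>\<V>. \<V> \<subseteq> \<U> \<and> countable \<V> \<and> M \<subseteq> \<Union>\<V>" using A' by blast
qed

lemma lind_closed:
  assumes "lind_set X K" "closedin X C"
  shows "lind_set X (K \<inter> C)"
  unfolding lind_set_def
proof (intro conjI allI impI)
  show "K \<inter> C \<subseteq> topspace X" using assms(1) unfolding lind_set_def by auto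
  fix \<U> assume H: "(\<forall>U\<in>\<U>. openin X U) \<and> K \<inter> C \<subseteq> \<Union>\<U>"
  let ?U = "insert (topspace X - C) \<U>"
  have "(\<forall>U\<in>?U. openin X U) \<and> K \<subseteq> \<Union>?U"
    using H assms unfolding lind_set_def by auto
  then obtain \<V> where V: "\<V> \<subseteq> ?U" "countable \<V>" "K \<subseteq> \<Union>\<V>"
    using assms(1) unfolding lind_set_def by meson
  show "\<exists>\<V>. \<V> \<subseteq> \<U> \<and> countable \<V> \<and> K \<inter> C \<subseteq> \<Union>\<V>"
    apply (rule exI[of _ "\<V> - {topspace X - C}"])
    using V by auto
qed

lemma lind_sep:
  assumes "lind_set X L" "Hausdorff_space X" "p_space X" "x \<in> topspace X" "x \<notin> L"
  shows "\<exists>A B. openin X A \<and> openin X B \<and> L \<subseteq> A \<and> x \<in> B \<and> A \<inter> B = {}"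
proof -
  have "\<forall>l\<in>L. \<exists>A B. openin X A \<and> openin X B \<and> l \<in> A \<and> x \<in> B \<and> disjnt A B"
    using assms unfolding Hausdorff_space_def lind_set_def by (metis subsetD)
  then obtain A B where AB: "\<And>l. l \<in> L \<Longrightarrow> openin X (A l) \<and> openin X (B l) \<and> l \<in> A l \<and> x \<in> B l \<and> disjnt (A l) (B l)"
    by metis
  obtain C where C: "C \<subseteq> L" "countable C" "L \<subseteq> \<Union>(A ` C)"
    using lind_idx[of X L A] assms(1) AB by blast
  have "openin X (topspace X \<inter> \<Inter>(B ` C))"
    using assms(3) C AB unfolding p_space_def by auto
  moreover have "openin X (\<Union>(A ` C))" using C AB by auto
  moreover have "\<Union>(A ` C) \<inter> (topspace X \<inter> \<Inter>(B ` C)) = {}"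
    using C AB unfolding disjnt_def by blast
  moreover have "x \<in> topspace X \<inter> \<Inter>(B ` C)" using C AB assms(4) by auto
  ultimately show ?thesis using C(3) by blast
qed

lemma regular_lind:
  assumes "locally_menger X" "Hausdorff_space X" "p_space X" "openin X Ob" "x0 \<in> Ob"
  shows "\<exists>U K. openin X U \<and> lind_set X K \<and> x0 \<in> U \<and> U \<subseteq> K \<and> K \<subseteq> Ob"
proof -
  have x0: "x0 \<in> topspace X" using assms openin_subset by blast
  obtain U0 M where UM: "openin X U0" "M \<subseteq> topspace X" "menger_space (subtopology X M)" "x0 \<in> U0" "U0 \<subseteq> M"
    using assms(1) x0 unfolding locally_menger_def by blast
  have LM: "lind_set X M" using menger_lind UM by blast
  have LL: "lind_set X (M \<inter> (topspace X - Ob))"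
    using lind_closed[OF LM] assms(4) by blast
  obtain A B where AB: "openin X A" "openin X B" "M \<inter> (topspace X - Ob) \<subseteq> A" "x0 \<in> B" "A \<inter> B = {}"
    using lind_sep[OF LL assms(2,3) x0] assms(5) by blast
  have LK: "lind_set X (M \<inter> (topspace X - A))"
    using lind_closed[OF LM] AB(1) by blast
  show ?thesis
    apply (rule exI[of _ "U0 \<inter> B \<inter> Ob"], rule exI[of _ "M \<inter> (topspace X - A)"])
    using LK AB UM assms openin_subset by auto
qed

lemma tube:
  assumes "lind_set X K" "p_space Y" "y \<in> topspace Y" "openin (prod_topology X Y) G"
    "K \<times> {y} \<subseteq> G"
  shows "\<exists>V. openin Y V \<and> y \<in> V \<and> K \<times> V \<subseteq> G"
proof -
  have "\<forall>x\<in>K. \<exists>U V. openin X U \<and> openin Y V \<and> x \<in> U \<and> y \<in> V \<and> U \<times> V \<subseteq> G"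
    using assms(4,5) unfolding openin_prod_topology_alt by blast
  then obtain U V where UV: "\<And>x. x \<in> K \<Longrightarrow> openin X (U x) \<and> openin Y (V x) \<and> x \<in> U x \<and> y \<in> V x \<and> U x \<times> V x \<subseteq> G"
    by metis
  obtain C where C: "C \<subseteq> K" "countable C" "K \<subseteq> \<Union>(U ` C)"
    using lind_idx[of X K U] assms(1) UV by blast
  have "openin Y (topspace Y \<inter> \<Inter>(V ` C))"
    using assms(2) C UV unfolding p_space_def by auto
  moreover have "y \<in> topspace Y \<inter> \<Inter>(V ` C)" using C UV assms(3) by auto
  moreover have "K \<times> (topspace Y \<inter> \<Inter>(V ` C)) \<subseteq> G"
  proof clarify
    fix a b assume "a \<in> K" "b \<in> topspace Y" "b \<in> \<Inter>(V ` C)"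
    then obtain c where "c \<in> C" "a \<in> U c" using C by blast
    then show "(a, b) \<in> G" using UV[of c] C \<open>b \<in> \<Inter>(V ` C)\<close> by blast
  qed
  ultimately show ?thesis by blast
qed

theorem theorem4p16:
  fixes X :: "'a topology" and Y :: "'b topology" and Z :: "'c topology"
    and q :: "'b \<Rightarrow> 'c"
  assumes "locally_menger X" and "Hausdorff_space X" and "p_space X"
    and "p_space Y"
    and "quotient_map Y Z q"
  shows "quotient_map (prod_topology X Y) (prod_topology X Z) (\<lambda>(x, y). (x, q y))"
proof -
  let ?f = "\<lambda>(x, y). (x, q y)"
  have qs: "q ` topspace Y = topspace Z" using assms(5) unfolding quotient_map_def by blast
  have qo: "\<And>U. U \<subseteq> topspace Z \<Longrightarrow> openin Y {x \<in> topspace Y. q x \<in> U} \<Longrightarrow> openin Z U"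
    using assms(5) unfolding quotient_map_def by blast
  have cq: "continuous_map Y Z q" using assms(5) quotient_imp_continuous_map by blast
  have cf: "continuous_map (prod_topology X Y) (prod_topology X Z) ?f"
    using cq continuous_map_prod_top[of X Y X Z id q] by (simp add: id_def)
  have surj: "?f ` topspace (prod_topology X Y) = topspace (prod_topology X Z)"
    using qs by (auto simp: image_iff) (metis qs imageE)
  show ?thesis
    unfolding quotient_map_def
  proof (intro conjI allI impI iffI)
    show "?f ` topspace (prod_topology X Y) = topspace (prod_topology X Z)" by (rule surj)
  next
    fix W assume "openin (prod_topology X Z) W"
    then show "openin (prod_topology X Y) {p \<in> topspace (prod_topology X Y). ?f p \<in> W}"
      using openin_continuous_map_preimage[OF cf] by blast
  next
    fix W assume Wsub: "W \<subseteq> topspace (prod_topology X Z)"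
      and Gopen: "openin (prod_topology X Y) {p \<in> topspace (prod_topology X Y). ?f p \<in> W}"
    define G where "G = {p \<in> topspace (prod_topology X Y). ?f p \<in> W}"
    have Go: "openin (prod_topology X Y) G" using Gopen G_def by simp
    show "openin (prod_topology X Z) W"
    proof (subst openin_subopen, intro ballI)
      fix p assume "p \<in> W"
      then obtain x0 z0 where p: "p = (x0, z0)" "x0 \<in> topspace X" "z0 \<in> topspace Z"
        using Wsub by auto
      obtain y0 where y0: "y0 \<in> topspace Y" "q y0 = z0" using qs p by (metis imageE)
      define Ob where "Ob = {x \<in> topspace X. (x, y0) \<in> G}"
      have cx: "continuous_map X (prod_topology X Y) (\<lambda>x. (x, y0))"
        using y0 by (auto simp: continuous_map_pairwise o_def)
      have Oo: "openin X Ob" unfolding Ob_def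
        using openin_continuous_map_preimage[OF cx Go] by simp
      have "x0 \<in> Ob" unfolding Ob_def G_def using p y0 \<open>p \<in> W\<close> by auto
      then obtain U K where UK: "openin X U" "lind_set X K" "x0 \<in> U" "U \<subseteq> K" "K \<subseteq> Ob"
        using regular_lind[OF assms(1,2,3) Oo] by blast
      define V where "V = {z \<in> topspace Z. \<forall>x\<in>K. (x, z) \<in> W}"
      have Vo: "openin Z V"
      proof (rule qo)
        show "V \<subseteq> topspace Z" unfolding V_def by auto
        show "openin Y {y \<in> topspace Y. q y \<in> V}"
        proof (subst openin_subopen, intro ballI)
          fix y assume y: "y \<in> {y \<in> topspace Y. q y \<in> V}"
          have "K \<times> {y} \<subseteq> G" using y UK(2) unfolding V_def G_def lind_set_def by auto
          then obtain V' where V': "openin Y V'" "y \<in> V'" "K \<times> V' \<subseteq> G"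
            using tube[OF UK(2) assms(4) _ Go] y by blast
          have "V' \<subseteq> {y \<in> topspace Y. q y \<in> V}"
          proof
            fix y' assume "y' \<in> V'"
            then have "y' \<in> topspace Y" using V' openin_subset by blast
            then show "y' \<in> {y \<in> topspace Y. q y \<in> V}"
              using V' \<open>y' \<in> V'\<close> cq unfolding V_def G_def
              by (auto simp: continuous_map_def)
          qed
          then show "\<exists>T. openin Y T \<and> y \<in> T \<and> T \<subseteq> {y \<in> topspace Y. q y \<in> V}"
            using V' by blast
        qed
      qed
      have "z0 \<in> V" using UK(5) p y0 unfolding V_def Ob_def G_def by auto
      moreover have "U \<times> V \<subseteq> W" using UK(4) unfolding V_def by auto
      ultimately show "\<exists>T. openin (prod_topology X Z) T \<and> p \<in> T \<and> T \<subseteq> W"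
        using UK Vo p by (intro exI[of _ "U \<times> V"]) (auto simp: openin_prod_Times_iff)
    qed
  qed
qed

end
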